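(* For any $f : X \to \mathbb{R}$, Player II has a winning strategy in $\Gamma(f)$ if and only if $f$ is a limsup function.
   Context: Let $A$ be a non-empty countable set and $T$ a pruned tree on $A$ (a set of finite sequences of elements of $A$, closed under initial segments, in which every sequence has a proper extension in $T$). Let $X$ be the set of infinite branches of $T$, with the topology generated by the cylinder sets $O(s) = \{x \in X : s \text{ is an initial segment of } x\}$, $s \in T$. A function $f : X \to \mathbb{R}$ is a limsup function if there exists $u : T \to \mathbb{R}$ with $f(x) = \limsup_{t\to\infty} u(x_0,\dots,x_t)$ for every $x \in X$. The game $\Gamma(f)$: Player I and Player II alternate, Player I moving first; Player I plays $x_0, x_1, \dots \in A$ subject to $(x_0,\dots,x_t) \in T$ for all $t$, and after each move $x_t$ Player II plays a real number $v_t$ (both players see all previous moves). Player II wins the run $(x_0,v_0,x_1,v_1,\dots)$ iff $f(x_0,x_1,\dots) = \limsup_{t\to\infty} v_t$; otherwise Player I wins. *)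

theory Defs
  imports Complex_Main "HOL-Library.Liminf_Limsup" "HOL-Library.Extended_Real" "HOL-Library.Countable_Set"
begin

text \<open>Finite sequences are lists; the initial segment of length n of an infinite
  sequence x is map x [0..<n].\<close>

definition pruned_tree :: "'a set \<Rightarrow> 'a list set \<Rightarrow> bool" where
  "pruned_tree A T \<longleftrightarrow>
     T \<subseteq> lists A \<and>
     (\<forall>s t. s @ t \<in> T \<longrightarrow> s \<in> T) \<and>
     (\<forall>s\<in>T. \<exists>a. s @ [a] \<in> T)"

definition branches :: "'a list set \<Rightarrow> (nat \<Rightarrow> 'a) set" where
  "branches T = {x. \<forall>n. map x [0..<Suc n] \<in> T}"

definition limsup_function :: "'a list set \<Rightarrow> ((nat \<Rightarrow> 'a) \<Rightarrow> real) \<Rightarrow> bool" where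
  "limsup_function T f \<longleftrightarrow>
     (\<exists>u :: 'a list \<Rightarrow> real. \<forall>x\<in>branches T.
        ereal (f x) = limsup (\<lambda>t. ereal (u (map x [0..<Suc t]))))"

text \<open>A strategy of Player II: given Player I's moves x_0..x_t and II's previous
  moves v_0..v_(t-1), it returns v_t.  A run (x, v) is consistent with sigma if
  every v_t is produced by sigma.\<close>
definition consistent_II ::
    "('a list \<Rightarrow> real list \<Rightarrow> real) \<Rightarrow> (nat \<Rightarrow> 'a) \<Rightarrow> (nat \<Rightarrow> real) \<Rightarrow> bool" where
  "consistent_II \<sigma> x v \<longleftrightarrow> (\<forall>t. v t = \<sigma> (map x [0..<Suc t]) (map v [0..<t]))"

definition II_wins_run :: "((nat \<Rightarrow> 'a) \<Rightarrow> real) \<Rightarrow> (nat \<Rightarrow> 'a) \<Rightarrow> (nat \<Rightarrow> real) \<Rightarrow> bool" where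
  "II_wins_run f x v \<longleftrightarrow> ereal (f x) = limsup (\<lambda>t. ereal (v t))"

definition winning_strategy_II ::
    "'a list set \<Rightarrow> ((nat \<Rightarrow> 'a) \<Rightarrow> real) \<Rightarrow> ('a list \<Rightarrow> real list \<Rightarrow> real) \<Rightarrow> bool" where
  "winning_strategy_II T f \<sigma> \<longleftrightarrow>
     (\<forall>x\<in>branches T. \<forall>v. consistent_II \<sigma> x v \<longrightarrow> II_wins_run f x v)"

end

theory Submission
  imports Defs
begin

fun rv :: "('a list \<Rightarrow> real list \<Rightarrow> real) \<Rightarrow> 'a list \<Rightarrow> real list" where
  "rv \<sigma> [] = []"
| "rv \<sigma> (a # r) = rv \<sigma> r @ [\<sigma> (rev (a # r)) (rv \<sigma> r)]"

lemma rv_map: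
  "rv \<sigma> (rev (map x [0..<t])) =
     map (\<lambda>i. \<sigma> (map x [0..<Suc i]) (rv \<sigma> (rev (butlast (map x [0..<Suc i]))))) [0..<t]"
proof (induction t)
  case 0
  then show ?case by simp
next
  case (Suc t)
  have "rev (map x [0..<Suc t]) = x t # rev (map x [0..<t])" by simp
  then show ?case using Suc by simp
qed

theorem mainTheorem6:
  fixes A :: "'a set" and T :: "'a list set" and f :: "(nat \<Rightarrow> 'a) \<Rightarrow> real"
  assumes "A \<noteq> {}" and "countable A" and "pruned_tree A T"
  shows "(\<exists>\<sigma>. winning_strategy_II T f \<sigma>) \<longleftrightarrow> limsup_function T f"
proof
  assume "\<exists>\<sigma>. winning_strategy_II T f \<sigma>"
  then obtain \<sigma> where w: "winning_strategy_II T f \<sigma>" by blast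
  define u where "u s = \<sigma> s (rv \<sigma> (rev (butlast s)))" for s
  show "limsup_function T f"
    unfolding limsup_function_def
  proof (intro exI ballI)
    fix x assume x: "x \<in> branches T"
    define v where "v t = u (map x [0..<Suc t])" for t
    have "consistent_II \<sigma> x v"
      unfolding consistent_II_def
    proof
      fix t
      have "map v [0..<t] = rv \<sigma> (rev (map x [0..<t]))"
        using rv_map[of \<sigma> x t] by (simp add: v_def u_def)
      then show "v t = \<sigma> (map x [0..<Suc t]) (map v [0..<t])"
      proof -
        have "butlast (map x [0..<Suc t]) = map x [0..<t]" by simp
        then show ?thesis using \<open>map v [0..<t] = _\<close> by (simp only: v_def u_def)
      qed
    qed
    with w x have "II_wins_run f x v" unfolding winning_strategy_II_def by blast
    then show "ereal (f x) = limsup (\<lambda>t. ereal (u (map x [0..<Suc t])))"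
      unfolding II_wins_run_def v_def .
  qed
next
  assume "limsup_function T f"
  then obtain u where u: "\<forall>x\<in>branches T. ereal (f x) = limsup (\<lambda>t. ereal (u (map x [0..<Suc t])))"
    unfolding limsup_function_def by blast
  have "winning_strategy_II T f (\<lambda>s vs. u s)"
    unfolding winning_strategy_II_def consistent_II_def II_wins_run_def
  proof (intro ballI allI impI)
    fix x v assume x: "x \<in> branches T" and c: "\<forall>t. v t = u (map x [0..<Suc t])"
    have "v = (\<lambda>t. u (map x [0..<Suc t]))" using c by auto
    then show "ereal (f x) = limsup (\<lambda>t. ereal (v t))" using u x by simp
  qed
  then show "\<exists>\<sigma>. winning_strategy_II T f \<sigma>" by blast
qed

end
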